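(* Let $l_2$ be an even positive integer and $l_3$ an odd integer with $l_3>1$, and let $G=\Theta(1,l_2,l_3)$. Then $G$ is enumeratively chromatic-choosable.
   Context: For positive integers $l_1,l_2,l_3$, the theta graph $\Theta(l_1,l_2,l_3)$ consists of two end vertices joined by three internally disjoint paths of lengths (numbers of edges) $l_1,l_2,l_3$. An $m$-assignment $L$ for a graph $G$ assigns to each vertex $v$ a set $L(v)$ of $m$ colors; $P(G,L)$ is the number of proper colorings $f$ of $G$ with $f(v)\in L(v)$ for all $v$. $P(G,m)$ is the chromatic polynomial, and the list color function $P_\ell(G,m)$ is the minimum of $P(G,L)$ over all $m$-assignments $L$. $G$ is enumeratively chromatic-choosable if $P_\ell(G,m)=P(G,m)$ for all $m\in\mathbb{N}$. *)

theory Defs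
  imports Main
begin

text \<open>Simple graphs are given by a vertex set V and an edge set E of 2-element sets.
Colours are natural numbers.\<close>

definition proper_list_colorings ::
  "'v set \<Rightarrow> 'v set set \<Rightarrow> ('v \<Rightarrow> nat set) \<Rightarrow> ('v \<Rightarrow> nat) set" where
  "proper_list_colorings V E L =
     {f. (\<forall>v\<in>V. f v \<in> L v) \<and> (\<forall>v. v \<notin> V \<longrightarrow> f v = undefined)
         \<and> (\<forall>u w. {u, w} \<in> E \<longrightarrow> f u \<noteq> f w)}"

definition num_list_colorings :: "'v set \<Rightarrow> 'v set set \<Rightarrow> ('v \<Rightarrow> nat set) \<Rightarrow> nat" where
  "num_list_colorings V E L = card (proper_list_colorings V E L)"

definition chrom_poly :: "'v set \<Rightarrow> 'v set set \<Rightarrow> nat \<Rightarrow> nat" where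
  "chrom_poly V E m = num_list_colorings V E (\<lambda>_. {0..<m})"

definition m_assignment :: "'v set \<Rightarrow> nat \<Rightarrow> ('v \<Rightarrow> nat set) \<Rightarrow> bool" where
  "m_assignment V m L \<longleftrightarrow> (\<forall>v\<in>V. finite (L v) \<and> card (L v) = m)"

definition list_color_fun :: "'v set \<Rightarrow> 'v set set \<Rightarrow> nat \<Rightarrow> nat" where
  "list_color_fun V E m = Inf {num_list_colorings V E L | L. m_assignment V m L}"

definition enum_chrom_choosable :: "'v set \<Rightarrow> 'v set set \<Rightarrow> bool" where
  "enum_chrom_choosable V E \<longleftrightarrow> (\<forall>m. list_color_fun V E m = chrom_poly V E m)"

text \<open>Theta graph. End vertices are (0,0) and (0,1); the j-th internal vertex
(0 < j < l_i) of path i (i = 1,2,3) is (i,j).\<close>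
definition theta_pt :: "nat \<Rightarrow> nat \<Rightarrow> nat \<Rightarrow> nat \<times> nat" where
  "theta_pt l i j = (if j = 0 then (0, 0) else if j = l then (0, 1) else (i, j))"

definition theta_len :: "nat \<Rightarrow> nat \<Rightarrow> nat \<Rightarrow> nat \<Rightarrow> nat" where
  "theta_len l1 l2 l3 i = (if i = 1 then l1 else if i = 2 then l2 else l3)"

definition theta_V :: "nat \<Rightarrow> nat \<Rightarrow> nat \<Rightarrow> (nat \<times> nat) set" where
  "theta_V l1 l2 l3 = (\<Union>i\<in>{1,2,3}. theta_pt (theta_len l1 l2 l3 i) i ` {0..theta_len l1 l2 l3 i})"

definition theta_E :: "nat \<Rightarrow> nat \<Rightarrow> nat \<Rightarrow> (nat \<times> nat) set set" where
  "theta_E l1 l2 l3 = (\<Union>i\<in>{1,2,3}.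
     (\<lambda>j. {theta_pt (theta_len l1 l2 l3 i) i j, theta_pt (theta_len l1 l2 l3 i) i (Suc j)})
       ` {0..<theta_len l1 l2 l3 i})"

end

theory Submission
  imports Defs
begin


definition pw :: "nat set list \<Rightarrow> nat list set" where
  "pw K = {zs. length zs = length K \<and> (\<forall>i<length K. zs!i \<in> K!i) \<and>
              (\<forall>i. Suc i < length zs \<longrightarrow> zs!i \<noteq> zs!Suc i)}"

definition ends :: "nat set list \<Rightarrow> nat \<Rightarrow> nat \<Rightarrow> nat" where
  "ends K a b = card {zs \<in> pw K. zs!0 = a \<and> last zs = b}"

definition cyc :: "nat set list \<Rightarrow> nat list set" where
  "cyc K = {zs \<in> pw K. zs!0 \<noteq> last zs}"

fun Sf :: "nat \<Rightarrow> nat \<Rightarrow> nat" and Df :: "nat \<Rightarrow> nat \<Rightarrow> nat" where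
  "Sf m 0 = 0"
| "Sf m (Suc n) = (m - 1) * Df m n"
| "Df m 0 = 1"
| "Df m (Suc n) = Sf m n + (m - 2) * Df m n"

lemma pw_finite:
  assumes "\<forall>X\<in>set K. finite X"
  shows "finite (pw K)"
proof -
  have "pw K \<subseteq> {zs. set zs \<subseteq> \<Union>(set K) \<and> length zs = length K}"
    unfolding pw_def using assms by (auto simp: in_set_conv_nth) (metis in_set_conv_nth)
  moreover have "finite {zs. set zs \<subseteq> \<Union>(set K) \<and> length zs = length K}"
    using assms by (intro finite_lists_length_eq) auto
  ultimately show ?thesis by (rule finite_subset)
qed

lemma pw_Cons_set:
  assumes "K \<noteq> []"
  shows "{zs \<in> pw (A # K). zs!0 = a \<and> last zs = b} =
         (if a \<in> A then (\<lambda>zs. a # zs) ` (\<Union>c\<in>K!0 - {a}. {zs \<in> pw K. zs!0 = c \<and> last zs = b}) else {})"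
proof (cases "a \<in> A")
  case True
  show ?thesis
  proof (simp only: True if_True, intro equalityI subsetI)
    fix zs assume "zs \<in> {zs \<in> pw (A # K). zs!0 = a \<and> last zs = b}"
    then have zs: "length zs = Suc (length K)" "\<forall>i<Suc (length K). zs!i \<in> (A#K)!i"
      "\<forall>i. Suc i < length zs \<longrightarrow> zs!i \<noteq> zs!Suc i" "zs!0 = a" "last zs = b"
      unfolding pw_def by auto
    then obtain ys where ys: "zs = a # ys" by (cases zs) auto
    have "length ys = length K" using zs ys by simp
    moreover have "\<forall>i<length K. ys!i \<in> K!i" using zs(2) ys by fastforce
    moreover have "\<forall>i. Suc i < length ys \<longrightarrow> ys!i \<noteq> ys!Suc i" using zs(3) ys by fastforce
    moreover have "ys!0 \<noteq> a" using zs(3) ys assms \<open>length ys = length K\<close> by fastforce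
    moreover have "last ys = b" using zs ys assms \<open>length ys = length K\<close> by (cases ys) auto
    ultimately have "ys \<in> (\<Union>c\<in>K!0 - {a}. {zs \<in> pw K. zs!0 = c \<and> last zs = b})"
      using assms unfolding pw_def by auto
    then show "zs \<in> (\<lambda>zs. a # zs) ` (\<Union>c\<in>K!0 - {a}. {zs \<in> pw K. zs!0 = c \<and> last zs = b})"
      using ys by blast
  next
    fix zs assume "zs \<in> (\<lambda>zs. a # zs) ` (\<Union>c\<in>K!0 - {a}. {zs \<in> pw K. zs!0 = c \<and> last zs = b})"
    then obtain ys c where ys: "zs = a # ys" "c \<in> K!0" "c \<noteq> a" "ys \<in> pw K" "ys!0 = c" "last ys = b"
      by auto
    have ly: "length ys = length K" using ys unfolding pw_def by auto
    have "\<forall>i. Suc i < length zs \<longrightarrow> zs!i \<noteq> zs!Suc i"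
    proof (intro allI impI)
      fix i assume "Suc i < length zs"
      show "zs!i \<noteq> zs!Suc i"
      proof (cases i)
        case 0 then show ?thesis using ys by simp
      next
        case (Suc j) then show ?thesis using ys \<open>Suc i < length zs\<close> unfolding pw_def by auto
      qed
    qed
    moreover have "\<forall>i<length (A#K). zs!i \<in> (A#K)!i"
    proof (intro allI impI)
      fix i assume "i < length (A#K)"
      then show "zs!i \<in> (A#K)!i" using ys True ly unfolding pw_def by (cases i) auto
    qed
    moreover have "last zs = b" using ys ly assms by (cases ys) auto
    ultimately show "zs \<in> {zs \<in> pw (A # K). zs!0 = a \<and> last zs = b}"
      using ys ly unfolding pw_def by auto
  qed
next
  case False
  have "\<forall>zs \<in> pw (A#K). zs!0 \<in> A" unfolding pw_def by force
  then show ?thesis using False by auto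
qed

lemma ends_Cons:
  assumes "K \<noteq> []" "\<forall>X\<in>set K. finite X" "finite (K!0)"
  shows "ends (A # K) a b = (if a \<in> A then (\<Sum>c\<in>K!0 - {a}. ends K c b) else 0)"
proof (cases "a \<in> A")
  case True
  have "ends (A # K) a b = card ((\<lambda>zs. a # zs) ` (\<Union>c\<in>K!0 - {a}. {zs \<in> pw K. zs!0 = c \<and> last zs = b}))"
    unfolding ends_def using pw_Cons_set[OF assms(1)] True by simp
  also have "\<dots> = card (\<Union>c\<in>K!0 - {a}. {zs \<in> pw K. zs!0 = c \<and> last zs = b})"
    by (rule card_image) (simp add: inj_on_def)
  also have "\<dots> = (\<Sum>c\<in>K!0 - {a}. card {zs \<in> pw K. zs!0 = c \<and> last zs = b})"
    by (rule card_UN_disjoint) (use assms pw_finite in auto)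
  finally show ?thesis using True unfolding ends_def by simp
next
  case False
  then show ?thesis unfolding ends_def using pw_Cons_set[OF assms(1)] by simp
qed

lemma ends_single: "ends [A] c j = (if c = j \<and> c \<in> A then 1 else 0)"
proof -
  have "{zs \<in> pw [A]. zs!0 = c \<and> last zs = j} = (if c = j \<and> c \<in> A then {[c]} else {})"
  proof (intro equalityI subsetI)
    fix zs assume "zs \<in> {zs \<in> pw [A]. zs!0 = c \<and> last zs = j}"
    then have "length zs = 1" "zs!0 \<in> A" "zs!0 = c" "last zs = j" unfolding pw_def by auto
    then show "zs \<in> (if c = j \<and> c \<in> A then {[c]} else {})"
      by (cases zs) auto
  next
    fix zs assume "zs \<in> (if c = j \<and> c \<in> A then {[c]} else {})"
    then show "zs \<in> {zs \<in> pw [A]. zs!0 = c \<and> last zs = j}"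
      unfolding pw_def by (auto split: if_splits)
  qed
  then show ?thesis unfolding ends_def by (auto split: if_splits)
qed

lemma sum_split:
  fixes x y :: nat
  assumes "i < m" "j < m"
  shows "(\<Sum>c\<in>{0..<m}-{i}. if c = j then x else y) = (if i = j then (m-1)*y else x + (m-2)*y)"
proof (cases "i = j")
  case True
  then have "(\<Sum>c\<in>{0..<m}-{i}. if c = j then x else y) = (\<Sum>c\<in>{0..<m}-{i}. y)"
    by (intro sum.cong) auto
  also have "\<dots> = (m-1)*y" using assms by simp
  finally show ?thesis using True by simp
next
  case False
  have jin: "j \<in> {0..<m}-{i}" using assms False by auto
  have "(\<Sum>c\<in>{0..<m}-{i}. if c = j then x else y) = (if j = j then x else y) + (\<Sum>c\<in>{0..<m}-{i}-{j}. if c = j then x else y)"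
    by (rule sum.remove) (use jin in auto)
  also have "(\<Sum>c\<in>{0..<m}-{i}-{j}. if c = j then x else y) = (\<Sum>c\<in>{0..<m}-{i}-{j}. y)"
    by (intro sum.cong) auto
  also have "\<dots> = (m-2)*y"
  proof -
    have "card ({0..<m}-{i}-{j}) = m - 2" using assms False jin by (simp add: card_Diff_subset)
    then show ?thesis by simp
  qed
  finally show ?thesis using False by simp
qed

lemma const_ends:
  "i < m \<Longrightarrow> j < m \<Longrightarrow> ends (replicate (Suc (Suc n)) {0..<m}) i j = (if i = j then Sf m n else Df m n)"
proof (induction n arbitrary: i)
  case 0
  have "ends (replicate (Suc (Suc 0)) {0..<m}) i j = (\<Sum>c\<in>{0..<m}-{i}. ends [{0..<m}] c j)"
    using ends_Cons[of "[{0..<m}]" "{0..<m}" i j] 0 by simp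
  also have "\<dots> = (\<Sum>c\<in>{0..<m}-{i}. if c = j then 1 else 0)"
    by (intro sum.cong) (auto simp: ends_single 0)
  also have "\<dots> = (if i = j then Sf m 0 else Df m 0)"
    using sum_split[OF 0, of 1 0] by simp
  finally show ?case .
next
  case (Suc n)
  have "ends (replicate (Suc (Suc (Suc n))) {0..<m}) i j =
        (\<Sum>c\<in>{0..<m}-{i}. ends (replicate (Suc (Suc n)) {0..<m}) c j)"
    using ends_Cons[of "replicate (Suc (Suc n)) {0..<m}" "{0..<m}" i j] Suc.prems by simp
  also have "\<dots> = (\<Sum>c\<in>{0..<m}-{i}. if c = j then Sf m n else Df m n)"
  proof (intro sum.cong refl)
    fix c assume "c \<in> {0..<m}-{i}"
    then show "ends (replicate (Suc (Suc n)) {0..<m}) c j = (if c = j then Sf m n else Df m n)"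
      using Suc.IH[of c] Suc.prems by auto
  qed
  also have "\<dots> = (if i = j then Sf m (Suc n) else Df m (Suc n))"
    using sum_split[OF Suc.prems, of "Sf m n" "Df m n"] by simp
  finally show ?case .
qed

lemma SD_parity:
  assumes "2 \<le> m"
  shows "(even n \<longrightarrow> Df m n = Sf m n + 1) \<and> (odd n \<longrightarrow> Sf m n = Df m n + 1)"
proof (induction n)
  case 0 then show ?case by simp
next
  case (Suc n)
  obtain q where q: "m = q + 2" using assms by (metis add.commute le_Suc_ex)
  show ?case
  proof (cases "even n")
    case True
    then have "Df m n = Sf m n + 1" using Suc by simp
    then show ?thesis using True q by (simp add: algebra_simps)
  next
    case False
    then have "Sf m n = Df m n + 1" using Suc by simp
    then show ?thesis using False q by (simp add: algebra_simps)
  qed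
qed

lemma SD_small:
  assumes "m \<le> 2"
  shows "Sf m (2*n) = 0 \<and> Df m (Suc (2*n)) = 0"
proof (induction n)
  case 0 then show ?case using assms by simp
next
  case (Suc n)
  have "Sf m (2 * Suc n) = 0" using Suc by simp
  moreover have "m - 2 = 0" using assms by simp
  ultimately show ?case using assms by simp
qed



lemma last_len: "length xs = Suc n \<Longrightarrow> last xs = xs ! n"
  by (metis diff_Suc_1 last_conv_nth list.size(3) nat.distinct(1))

lemma extend_bij:
  assumes s: "bij_betw s {0..<m} A" and fB: "finite B" and cB: "card B = m"
  shows "\<exists>\<tau>. bij_betw \<tau> {0..<m} B \<and> (\<forall>i<m. s i \<in> B \<longrightarrow> \<tau> i = s i)"
proof -
  define I where "I = {i. i < m \<and> s i \<in> B}"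
  define J where "J = {0..<m} - I"
  have fA: "finite A" using s bij_betw_finite by blast
  have sI: "bij_betw s I (A \<inter> B)"
  proof (rule bij_betw_subset[OF s])
    show "I \<subseteq> {0..<m}" unfolding I_def by auto
    show "s ` I = A \<inter> B"
    proof
      show "s ` I \<subseteq> A \<inter> B" unfolding I_def using s by (auto simp: bij_betw_def)
      show "A \<inter> B \<subseteq> s ` I"
      proof
        fix y assume y: "y \<in> A \<inter> B"
        then obtain i where "i \<in> {0..<m}" "s i = y" using s by (auto simp: bij_betw_def)
        then show "y \<in> s ` I" unfolding I_def using y by auto
      qed
    qed
  qed
  have cI: "card I = card (A \<inter> B)" using sI bij_betw_same_card by blast
  have cA: "card A = m" using s bij_betw_same_card by fastforce
  have "I \<subseteq> {0..<m}" "finite I" unfolding I_def by auto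
  then have "card J = m - card I" unfolding J_def using card_Diff_subset[of I "{0..<m}"] by simp
  moreover have "card (B - A) = m - card (A \<inter> B)"
    using cB fB by (metis Int_commute card_Diff_subset_Int finite_Int)
  ultimately have "card J = card (B - A)" using cI by simp
  then obtain g where g: "bij_betw g J (B - A)"
    using finite_same_card_bij[of J "B - A"] fB unfolding J_def by auto
  have "bij_betw (\<lambda>x. if x \<in> I then s x else g x) (I \<union> J) ((A \<inter> B) \<union> (B - A))"
    by (rule bij_betw_disjoint_Un[OF sI g]) (auto simp: J_def)
  moreover have "I \<union> J = {0..<m}" unfolding I_def J_def by auto
  moreover have "(A \<inter> B) \<union> (B - A) = B" by auto
  ultimately have "bij_betw (\<lambda>x. if x \<in> I then s x else g x) {0..<m} B" by simp
  moreover have "\<forall>i<m. s i \<in> B \<longrightarrow> (\<lambda>x. if x \<in> I then s x else g x) i = s i"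
    unfolding I_def by auto
  ultimately show ?thesis by blast
qed

definition relab :: "nat set list \<Rightarrow> nat \<Rightarrow> (nat \<Rightarrow> nat \<Rightarrow> nat) \<Rightarrow> bool" where
  "relab K m \<sigma> \<longleftrightarrow> (\<forall>t<length K. bij_betw (\<sigma> t) {0..<m} (K!t)) \<and>
     (\<forall>t i. Suc t < length K \<longrightarrow> i < m \<longrightarrow> \<sigma> t i \<in> K!Suc t \<longrightarrow> \<sigma> (Suc t) i = \<sigma> t i)"

lemma relabel_exists:
  assumes "\<forall>X\<in>set K. finite X \<and> card X = m"
  shows "\<exists>\<sigma>. relab K m \<sigma>"
  using assms
proof (induction K rule: rev_induct)
  case Nil
  then show ?case unfolding relab_def by auto
next
  case (snoc B K)
  then obtain \<sigma> where \<sigma>: "relab K m \<sigma>" by auto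
  have fB: "finite B" "card B = m" using snoc.prems by auto
  show ?case
  proof (cases "K = []")
    case True
    obtain h where h: "bij_betw h {0..<card B} B" using ex_bij_betw_nat_finite[OF fB(1)] by blast
    have "relab (K @ [B]) m (\<lambda>_. h)" unfolding relab_def using True h fB by auto
    then show ?thesis by blast
  next
    case False
    define t0 where "t0 = length K - 1"
    have t0: "t0 < length K" "Suc t0 = length K" using False unfolding t0_def by auto
    have s: "bij_betw (\<sigma> t0) {0..<m} (K!t0)" using \<sigma> t0 unfolding relab_def by auto
    obtain \<tau> where \<tau>: "bij_betw \<tau> {0..<m} B" "\<forall>i<m. \<sigma> t0 i \<in> B \<longrightarrow> \<tau> i = \<sigma> t0 i"
      using extend_bij[OF s fB] by blast
    define \<sigma>' where "\<sigma>' = \<sigma>(length K := \<tau>)"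
    have "relab (K @ [B]) m \<sigma>'"
      unfolding relab_def
    proof (intro conjI allI impI)
      fix t assume "t < length (K @ [B])"
      then show "bij_betw (\<sigma>' t) {0..<m} ((K @ [B]) ! t)"
        using \<sigma> \<tau> unfolding relab_def \<sigma>'_def
        by (cases "t < length K") (auto simp: nth_append)
    next
      fix t i assume a: "Suc t < length (K @ [B])" "i < m" "\<sigma>' t i \<in> (K @ [B]) ! Suc t"
      show "\<sigma>' (Suc t) i = \<sigma>' t i"
      proof (cases "Suc t < length K")
        case True
        then show ?thesis using a \<sigma> unfolding relab_def \<sigma>'_def by (auto simp: nth_append)
      next
        case False
        then have "Suc t = length K" using a by simp
        then have "t = t0" using t0 by simp
        then show ?thesis using a \<tau> \<open>Suc t = length K\<close> unfolding \<sigma>'_def by (auto simp: nth_append)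
      qed
    qed
    then show ?thesis by blast
  qed
qed

lemma relab_bij: "relab K m \<sigma> \<Longrightarrow> t < length K \<Longrightarrow> bij_betw (\<sigma> t) {0..<m} (K!t)"
  unfolding relab_def by auto

lemma relab_in: "relab K m \<sigma> \<Longrightarrow> t < length K \<Longrightarrow> i < m \<Longrightarrow> \<sigma> t i \<in> K!t"
proof -
  assume "relab K m \<sigma>" "t < length K" "i < m"
  then have "\<sigma> t ` {0..<m} = K!t" unfolding relab_def bij_betw_def by auto
  then show ?thesis using \<open>i < m\<close> by auto
qed

lemma relab_inj: "relab K m \<sigma> \<Longrightarrow> t < length K \<Longrightarrow> i < m \<Longrightarrow> i' < m \<Longrightarrow> \<sigma> t i = \<sigma> t i' \<Longrightarrow> i = i'"
  unfolding relab_def bij_betw_def inj_on_def by auto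

lemma relab_eq:
  assumes "relab K m \<sigma>" "Suc t < length K" "i < m" "i' < m"
  shows "\<sigma> t i = \<sigma> (Suc t) i' \<longleftrightarrow> (i = i' \<and> \<sigma> t i \<in> K!Suc t)"
proof
  assume h: "\<sigma> t i = \<sigma> (Suc t) i'"
  then have "\<sigma> t i \<in> K!Suc t" using relab_in[OF assms(1) assms(2) assms(4)] by simp
  moreover then have "\<sigma> (Suc t) i = \<sigma> t i" using assms unfolding relab_def by auto
  ultimately show "i = i' \<and> \<sigma> t i \<in> K!Suc t"
    using relab_inj[OF assms(1) assms(2) assms(3) assms(4)] h by simp
next
  assume "i = i' \<and> \<sigma> t i \<in> K!Suc t"
  then show "\<sigma> t i = \<sigma> (Suc t) i'" using assms unfolding relab_def by auto
qed

definition relmap :: "(nat \<Rightarrow> nat \<Rightarrow> nat) \<Rightarrow> nat \<Rightarrow> nat list \<Rightarrow> nat list" where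
  "relmap \<sigma> k \<psi> = map (\<lambda>t. \<sigma> t (\<psi>!t)) [0..<k]"

lemma relmap_nth: "t < k \<Longrightarrow> relmap \<sigma> k \<psi> ! t = \<sigma> t (\<psi>!t)"
  unfolding relmap_def by simp

lemma relmap_length[simp]: "length (relmap \<sigma> k \<psi>) = k"
  unfolding relmap_def by simp

lemma relmap_pw:
  assumes "relab K m \<sigma>" "length \<psi> = length K" "\<forall>t<length K. \<psi>!t < m"
    "\<forall>t. Suc t < length K \<longrightarrow> (\<psi>!t \<noteq> \<psi>!Suc t \<or> \<sigma> t (\<psi>!t) \<notin> K!Suc t)"
  shows "relmap \<sigma> (length K) \<psi> \<in> pw K"
  unfolding pw_def
proof (intro CollectI conjI allI impI)
  show "length (relmap \<sigma> (length K) \<psi>) = length K" by simp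
next
  fix i assume "i < length K"
  then show "relmap \<sigma> (length K) \<psi> ! i \<in> K ! i"
    using relab_in[OF assms(1)] assms(3) by (simp add: relmap_nth)
next
  fix i assume i: "Suc i < length (relmap \<sigma> (length K) \<psi>)"
  then have "Suc i < length K" by simp
  then show "relmap \<sigma> (length K) \<psi> ! i \<noteq> relmap \<sigma> (length K) \<psi> ! Suc i"
    using relab_eq[OF assms(1), of i "\<psi>!i" "\<psi>!Suc i"] assms(3,4)
    by (simp add: relmap_nth)
qed

lemma relmap_inj:
  assumes "relab K m \<sigma>"
  shows "inj_on (relmap \<sigma> (length K)) {\<psi>. length \<psi> = length K \<and> (\<forall>t<length K. \<psi>!t < m)}"
proof (rule inj_onI)
  fix \<psi> \<psi>' assume a: "\<psi> \<in> {\<psi>. length \<psi> = length K \<and> (\<forall>t<length K. \<psi>!t < m)}"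
    "\<psi>' \<in> {\<psi>. length \<psi> = length K \<and> (\<forall>t<length K. \<psi>!t < m)}"
    "relmap \<sigma> (length K) \<psi> = relmap \<sigma> (length K) \<psi>'"
  show "\<psi> = \<psi>'"
  proof (rule nth_equalityI)
    show "length \<psi> = length \<psi>'" using a by simp
    fix t assume "t < length \<psi>"
    then have t: "t < length K" using a by simp
    have "\<sigma> t (\<psi>!t) = \<sigma> t (\<psi>'!t)" using a(3) relmap_nth[OF t] by metis
    then show "\<psi>!t = \<psi>'!t" using relab_inj[OF assms t] a t by auto
  qed
qed

lemma pw_const_iff:
  "\<psi> \<in> pw (replicate k {0..<m}) \<longleftrightarrow> length \<psi> = k \<and> (\<forall>t<k. \<psi>!t < m) \<and> (\<forall>i. Suc i < k \<longrightarrow> \<psi>!i \<noteq> \<psi>!Suc i)"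
  unfolding pw_def by auto

lemma L1:
  assumes K: "\<forall>X\<in>set K. finite X \<and> card X = m" and lK: "length K = Suc (Suc n)"
    and n: "odd n" and m: "2 \<le> m" and a: "a \<in> K!0" and b: "b \<in> last K"
  shows "Df m n \<le> ends K a b"
proof -
  define k where "k = Suc (Suc n)"
  obtain \<sigma> where \<sigma>: "relab K m \<sigma>" using relabel_exists[OF K] by blast
  have b': "b \<in> K!(k-1)" using b lK unfolding k_def by (metis diff_Suc_1 last_conv_nth list.size(3) nat.distinct(1))
  have bij0: "bij_betw (\<sigma> 0) {0..<m} (K!0)" using relab_bij[OF \<sigma>] lK by simp
  have bij1: "bij_betw (\<sigma> (k-1)) {0..<m} (K!(k-1))" using relab_bij[OF \<sigma>] lK k_def by simp
  define i0 where "i0 = inv_into {0..<m} (\<sigma> 0) a"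
  define j0 where "j0 = inv_into {0..<m} (\<sigma> (k-1)) b"
  have ai: "a \<in> \<sigma> 0 ` {0..<m}" using bij0 a by (simp add: bij_betw_def)
  have bi: "b \<in> \<sigma> (k-1) ` {0..<m}" using bij1 b' by (simp add: bij_betw_def)
  have i0: "i0 < m" "\<sigma> 0 i0 = a" using inv_into_into[OF ai] f_inv_into_f[OF ai] unfolding i0_def by auto
  have j0: "j0 < m" "\<sigma> (k-1) j0 = b" using inv_into_into[OF bi] f_inv_into_f[OF bi] unfolding j0_def by auto
  define A where "A = {\<psi> \<in> pw (replicate k {0..<m}). \<psi>!0 = i0 \<and> last \<psi> = j0}"
  define B where "B = {zs \<in> pw K. zs!0 = a \<and> last zs = b}"
  have "relmap \<sigma> (length K) ` A \<subseteq> B"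
  proof
    fix zs assume "zs \<in> relmap \<sigma> (length K) ` A"
    then obtain \<psi> where \<psi>: "\<psi> \<in> A" "zs = relmap \<sigma> (length K) \<psi>" by auto
    have p: "length \<psi> = k" "\<forall>t<k. \<psi>!t < m" "\<forall>i. Suc i < k \<longrightarrow> \<psi>!i \<noteq> \<psi>!Suc i" "\<psi>!0 = i0" "last \<psi> = j0"
      using \<psi>(1) unfolding A_def pw_const_iff by auto
    have "zs \<in> pw K" unfolding \<psi>(2) using relmap_pw[OF \<sigma>] p lK k_def by auto
    moreover have "zs!0 = a" using \<psi>(2) p i0 lK by (simp add: relmap_nth)
    moreover have "last zs = b"
    proof -
      have "last \<psi> = \<psi>!(k-1)" using p(1) k_def last_len by simp
      moreover have "last zs = zs!(k-1)" using \<psi>(2) lK k_def last_len[of zs "Suc n"] by simp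
      ultimately show ?thesis using \<psi>(2) p j0 lK k_def by (simp add: relmap_nth)
    qed
    ultimately show "zs \<in> B" unfolding B_def by simp
  qed
  moreover have "inj_on (relmap \<sigma> (length K)) A"
  proof (rule inj_on_subset[OF relmap_inj[OF \<sigma>]])
    show "A \<subseteq> {\<psi>. length \<psi> = length K \<and> (\<forall>t<length K. \<psi>!t < m)}"
    proof
      fix \<psi> assume "\<psi> \<in> A"
      then have "\<psi> \<in> pw (replicate k {0..<m})" unfolding A_def by simp
      then have "length \<psi> = k \<and> (\<forall>t<k. \<psi>!t < m)" unfolding pw_const_iff by simp
      then show "\<psi> \<in> {\<psi>. length \<psi> = length K \<and> (\<forall>t<length K. \<psi>!t < m)}" using lK k_def by simp
    qed
  qed
  moreover have "finite B" unfolding B_def using pw_finite K by auto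
  ultimately have "card A \<le> card B" by (meson card_inj_on_le)
  moreover have "card A = (if i0 = j0 then Sf m n else Df m n)"
    using const_ends[OF i0(1) j0(1), of n] unfolding A_def ends_def k_def by simp
  moreover have "Df m n \<le> (if i0 = j0 then Sf m n else Df m n)" using SD_parity[OF m, of n] n by auto
  ultimately show ?thesis unfolding ends_def B_def by linarith
qed



lemma choose_q:
  fixes s :: "nat \<Rightarrow> 'b" and x :: nat
  assumes m: "3 \<le> m" and s: "inj_on s {0..<m}"
  shows "\<exists>q<m. q \<noteq> x \<and> s q \<noteq> y"
proof -
  have d: "s 0 \<noteq> s 1" "s 0 \<noteq> s 2" "s 1 \<noteq> s (2::nat)"
  proof -
    have i: "(0::nat) \<in> {0..<m}" "(1::nat) \<in> {0..<m}" "(2::nat) \<in> {0..<m}" using m by auto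
    show "s 0 \<noteq> s 1" "s 0 \<noteq> s 2" "s 1 \<noteq> s (2::nat)"
      using inj_onD[OF s _ i(1) i(2)] inj_onD[OF s _ i(1) i(3)] inj_onD[OF s _ i(2) i(3)] by auto
  qed
  show ?thesis
  proof (cases "s 1 = y")
    case True
    show ?thesis
    proof (cases "x = 0")
      case True then show ?thesis using \<open>s 1 = y\<close> d m by (intro exI[of _ 2]) auto
    next
      case False then show ?thesis using \<open>s 1 = y\<close> d m by (intro exI[of _ 0]) auto
    qed
  next
    case False
    show ?thesis
    proof (cases "x = 1")
      case False then show ?thesis using \<open>s 1 \<noteq> y\<close> m by (intro exI[of _ 1]) auto
    next
      case True
      show ?thesis
      proof (cases "s 0 = y")
        case True then show ?thesis using \<open>x = 1\<close> d m by (intro exI[of _ 2]) auto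
      next
        case False then show ?thesis using \<open>x = 1\<close> m by (intro exI[of _ 0]) auto
      qed
    qed
  qed
qed

lemma construct:
  fixes s0 s1 :: "nat \<Rightarrow> 'b" and j k t m :: nat
  assumes m: "3 \<le> m" and k: "4 \<le> k" and t: "Suc t < k" and j: "j < m"
    and s0: "inj_on s0 {0..<m}" and s1: "inj_on s1 {0..<m}"
  shows "\<exists>\<psi>. length \<psi> = k \<and> (\<forall>i<k. \<psi>!i < m) \<and> \<psi>!t = j \<and> \<psi>!Suc t = j \<and>
           (\<forall>i. Suc i < k \<longrightarrow> i \<noteq> t \<longrightarrow> \<psi>!i \<noteq> \<psi>!Suc i) \<and> s0 (\<psi>!0) \<noteq> s1 (\<psi>!(k-1))"
proof -
  define p where "p = (if j = 0 then 1 else (0::nat))"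
  define bf where "bf i = (if i \<le> t then (if even (t - i) then j else p) else (if even (i - Suc t) then j else p))" for i
  have pj: "p \<noteq> j" "p < m" unfolding p_def using m by auto
  have blt: "bf i < m" for i unfolding bf_def using pj j by auto
  have bt: "bf t = j" "bf (Suc t) = j" unfolding bf_def by auto
  have bne: "bf i \<noteq> bf (Suc i)" if "i \<noteq> t" for i
  proof (cases "i < t")
    case True
    then have "t - i = Suc (t - Suc i)" by simp
    then show ?thesis using True pj unfolding bf_def by auto
  next
    case False
    then have "i > t" using that by simp
    then have "Suc i - Suc t = Suc (i - Suc t)" by simp
    then show ?thesis using \<open>i > t\<close> pj unfolding bf_def by auto
  qed
  show ?thesis
  proof (cases "t = 0")
    case False
    obtain q where q: "q < m" "q \<noteq> bf 1" "s0 q \<noteq> s1 (bf (k-1))" using choose_q[OF m s0] by blast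
    define g where "g i = (if i = 0 then q else bf i)" for i
    have "length (map g [0..<k]) = k" by simp
    moreover have "\<forall>i<k. map g [0..<k] ! i < m" using q blt unfolding g_def by auto
    moreover have "map g [0..<k] ! t = j" "map g [0..<k] ! Suc t = j" using t bt False unfolding g_def by auto
    moreover have "\<forall>i. Suc i < k \<longrightarrow> i \<noteq> t \<longrightarrow> map g [0..<k] ! i \<noteq> map g [0..<k] ! Suc i"
      using bne q unfolding g_def by auto
    moreover have "s0 (map g [0..<k] ! 0) \<noteq> s1 (map g [0..<k] ! (k-1))"
      using q k unfolding g_def by auto
    ultimately show ?thesis by blast
  next
    case True
    obtain q where q: "q < m" "q \<noteq> bf (k-2)" "s1 q \<noteq> s0 (bf 0)" using choose_q[OF m s1] by blast
    define g where "g i = (if i = k-1 then q else bf i)" for i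
    have "length (map g [0..<k]) = k" by simp
    moreover have "\<forall>i<k. map g [0..<k] ! i < m" using q blt unfolding g_def by auto
    moreover have "map g [0..<k] ! t = j" "map g [0..<k] ! Suc t = j" using t bt True k unfolding g_def by auto
    moreover have "\<forall>i. Suc i < k \<longrightarrow> i \<noteq> t \<longrightarrow> map g [0..<k] ! i \<noteq> map g [0..<k] ! Suc i"
    proof (intro allI impI)
      fix i assume i: "Suc i < k" "i \<noteq> t"
      show "map g [0..<k] ! i \<noteq> map g [0..<k] ! Suc i"
      proof (cases "Suc i = k - 1")
        case True
        then have "i = k - 2" by simp
        then show ?thesis using i q True unfolding g_def by auto
      next
        case False
        then show ?thesis using i bne unfolding g_def by auto
      qed
    qed
    moreover have "s0 (map g [0..<k] ! 0) \<noteq> s1 (map g [0..<k] ! (k-1))"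
      using q k unfolding g_def by auto
    ultimately show ?thesis by blast
  qed
qed



lemma relab_cons: "relab K m \<sigma> \<Longrightarrow> Suc t < length K \<Longrightarrow> i < m \<Longrightarrow> \<sigma> t i \<in> K!Suc t \<Longrightarrow> \<sigma> (Suc t) i = \<sigma> t i"
  unfolding relab_def by blast

lemma L2:
  assumes K: "\<forall>X\<in>set K. finite X \<and> card X = m" and lK: "length K = Suc (Suc n)"
    and n: "even n" "n \<noteq> 0" and m: "3 \<le> m"
  shows "card (cyc (replicate (Suc (Suc n)) {0..<m})) \<le> card (cyc K)"
proof -
  define k where "k = Suc (Suc n)"
  have k4: "4 \<le> k" using n unfolding k_def by presburger
  obtain \<sigma> where \<sigma>: "relab K m \<sigma>" using relabel_exists[OF K] by blast
  have lK': "length K = k" using lK k_def by simp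
  define R where "R = replicate k {0..<m}"
  define P where "P = pw R"
  have Piff: "\<psi> \<in> P \<longleftrightarrow> length \<psi> = k \<and> (\<forall>t<k. \<psi>!t < m) \<and> (\<forall>i. Suc i < k \<longrightarrow> \<psi>!i \<noteq> \<psi>!Suc i)" for \<psi>
    unfolding P_def R_def by (rule pw_const_iff)
  have lastk: "last \<psi> = \<psi>!(k-1)" if "length \<psi> = k" for \<psi> :: "nat list"
    using that last_len[of \<psi> "Suc n"] k_def by simp
  have finP: "finite P" unfolding P_def R_def by (rule pw_finite) auto
  have inj0: "inj_on (\<sigma> 0) {0..<m}" and inj1: "inj_on (\<sigma> (k-1)) {0..<m}"
    using relab_bij[OF \<sigma>, of 0] relab_bij[OF \<sigma>, of "k-1"] lK' k4 by (auto simp: bij_betw_def)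
  define X where "X = {\<psi>. length \<psi> = k \<and> (\<forall>t<k. \<psi>!t < m) \<and>
      (\<forall>t. Suc t < k \<longrightarrow> \<psi>!t \<noteq> \<psi>!Suc t \<or> \<sigma> t (\<psi>!t) \<notin> K!Suc t) \<and> \<sigma> 0 (\<psi>!0) \<noteq> \<sigma> (k-1) (\<psi>!(k-1))}"
  have finX: "finite X"
  proof (rule finite_subset)
    show "X \<subseteq> {\<psi>. set \<psi> \<subseteq> {0..<m} \<and> length \<psi> = k}"
      unfolding X_def by (auto simp: in_set_conv_nth)
    show "finite {\<psi>. set \<psi> \<subseteq> {0..<m} \<and> length \<psi> = k}" by (rule finite_lists_length_eq) auto
  qed
  have X_le: "card X \<le> card (cyc K)"
  proof -
    have "relmap \<sigma> k ` X \<subseteq> cyc K"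
    proof
      fix zs assume "zs \<in> relmap \<sigma> k ` X"
      then obtain \<psi> where \<psi>: "\<psi> \<in> X" "zs = relmap \<sigma> k \<psi>" by auto
      have p: "length \<psi> = k" "\<forall>t<k. \<psi>!t < m"
        "\<forall>t. Suc t < k \<longrightarrow> \<psi>!t \<noteq> \<psi>!Suc t \<or> \<sigma> t (\<psi>!t) \<notin> K!Suc t"
        "\<sigma> 0 (\<psi>!0) \<noteq> \<sigma> (k-1) (\<psi>!(k-1))" using \<psi>(1) unfolding X_def by auto
      have "zs \<in> pw K" using relmap_pw[OF \<sigma>] p lK' \<psi>(2) by auto
      moreover have "zs!0 = \<sigma> 0 (\<psi>!0)" using \<psi>(2) k4 by (simp add: relmap_nth)
      moreover have "last zs = \<sigma> (k-1) (\<psi>!(k-1))"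
        using \<psi>(2) k4 lastk[of zs] by (simp add: relmap_nth)
      ultimately show "zs \<in> cyc K" unfolding cyc_def using p(4) by simp
    qed
    moreover have "inj_on (relmap \<sigma> k) X"
    proof -
      have "X \<subseteq> {\<psi>. length \<psi> = length K \<and> (\<forall>t<length K. \<psi>!t < m)}" unfolding X_def lK' by auto
      from inj_on_subset[OF relmap_inj[OF \<sigma>] this] show ?thesis using lK' by simp
    qed
    moreover have "finite (cyc K)" unfolding cyc_def using pw_finite K by auto
    ultimately show ?thesis by (meson card_inj_on_le)
  qed
  define Y where "Y = {\<psi>\<in>P. \<sigma> 0 (\<psi>!0) \<noteq> \<sigma> (k-1) (\<psi>!(k-1))}"
  define Z where "Z = {\<psi>\<in>X. \<exists>t. Suc t < k \<and> \<psi>!t = \<psi>!Suc t}"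
  have YZ: "card Y + card Z \<le> card X"
  proof -
    have "Y \<subseteq> X" unfolding Y_def X_def Piff by auto
    moreover have "Z \<subseteq> X" unfolding Z_def by auto
    moreover have "Y \<inter> Z = {}" unfolding Y_def Z_def Piff by auto
    ultimately have "card (Y \<union> Z) = card Y + card Z" "card (Y \<union> Z) \<le> card X"
      using finX card_Un_disjoint[of Y Z] finite_subset[of Y X] finite_subset[of Z X] card_mono[of X "Y \<union> Z"]
      by auto
    then show ?thesis by simp
  qed
  define J where "J = {j. j < m \<and> \<sigma> (k-1) j \<in> K!0}"
  define \<tau> where "\<tau> j = inv_into {0..<m} (\<sigma> 0) (\<sigma> (k-1) j)" for j
  define M where "M = {j\<in>J. \<tau> j \<noteq> j}"
  have finJ: "finite J" unfolding J_def by auto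
  have \<tau>J: "\<tau> j < m \<and> \<sigma> 0 (\<tau> j) = \<sigma> (k-1) j" if "j \<in> J" for j
  proof -
    have mem: "\<sigma> (k-1) j \<in> \<sigma> 0 ` {0..<m}"
      using that relab_bij[OF \<sigma>, of 0] k4 lK' unfolding J_def bij_betw_def by auto
    show ?thesis unfolding \<tau>_def using inv_into_into[OF mem] f_inv_into_f[OF mem] by simp
  qed
  define Q where "Q = {\<psi>\<in>P. \<sigma> 0 (\<psi>!0) = \<sigma> (k-1) (\<psi>!(k-1))}"
  have a: "card P = card Y + card Q"
  proof -
    have "P = Y \<union> Q" "Y \<inter> Q = {}" unfolding Y_def Q_def by auto
    moreover have "finite Y" "finite Q" using finP unfolding Y_def Q_def by auto
    ultimately show ?thesis using card_Un_disjoint[of Y Q] by simp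
  qed
  have Qeq: "Q = (\<Union>j\<in>J. {\<psi>\<in>P. \<psi>!0 = \<tau> j \<and> last \<psi> = j})"
  proof (intro equalityI subsetI)
    fix \<psi> assume "\<psi> \<in> Q"
    then have \<psi>: "\<psi> \<in> P" "\<sigma> 0 (\<psi>!0) = \<sigma> (k-1) (\<psi>!(k-1))" unfolding Q_def by auto
    then have p: "length \<psi> = k" "\<forall>t<k. \<psi>!t < m" using Piff by auto
    define j where "j = \<psi>!(k-1)"
    have jm: "j < m" using p k4 unfolding j_def by auto
    have "\<sigma> 0 (\<psi>!0) \<in> K!0" using relab_in[OF \<sigma>, of 0 "\<psi>!0"] p lK' k4 by auto
    then have jJ: "j \<in> J" unfolding J_def j_def using jm \<psi>(2) j_def by auto
    have "\<tau> j = \<psi>!0"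
      unfolding \<tau>_def j_def using \<psi>(2) inv_into_f_f[OF inj0, of "\<psi>!0"] p k4 by auto
    then show "\<psi> \<in> (\<Union>j\<in>J. {\<psi>\<in>P. \<psi>!0 = \<tau> j \<and> last \<psi> = j})"
      using jJ \<psi>(1) lastk[OF p(1)] unfolding j_def by auto
  next
    fix \<psi> assume "\<psi> \<in> (\<Union>j\<in>J. {\<psi>\<in>P. \<psi>!0 = \<tau> j \<and> last \<psi> = j})"
    then obtain j where j: "j \<in> J" "\<psi> \<in> P" "\<psi>!0 = \<tau> j" "last \<psi> = j" by auto
    then have "length \<psi> = k" using Piff by auto
    then show "\<psi> \<in> Q" unfolding Q_def using j \<tau>J[OF j(1)] lastk by auto
  qed
  have b: "card Q = (\<Sum>j\<in>J. ends R (\<tau> j) j)"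
    unfolding Qeq ends_def P_def
    by (rule card_UN_disjoint[OF finJ]) (use finP P_def in auto)
  define Q0 where "Q0 = {\<psi>\<in>P. \<psi>!0 = last \<psi>}"
  have c1: "card P = card (cyc R) + card Q0"
  proof -
    have "P = cyc R \<union> Q0" "cyc R \<inter> Q0 = {}" unfolding cyc_def Q0_def P_def by auto
    moreover have "finite (cyc R)" "finite Q0" using finP unfolding cyc_def Q0_def P_def by auto
    ultimately show ?thesis using card_Un_disjoint[of "cyc R" Q0] by simp
  qed
  have Q0eq: "Q0 = (\<Union>j\<in>{0..<m}. {\<psi>\<in>P. \<psi>!0 = j \<and> last \<psi> = j})"
  proof (intro equalityI subsetI)
    fix \<psi> assume "\<psi> \<in> Q0"
    then have "\<psi> \<in> P" "\<psi>!0 = last \<psi>" unfolding Q0_def by auto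
    moreover have "\<psi>!0 < m"
    proof -
      have "length \<psi> = k \<and> (\<forall>t<k. \<psi>!t < m)" using \<open>\<psi> \<in> P\<close> unfolding Piff by simp
      then show ?thesis using k4 by auto
    qed
    ultimately show "\<psi> \<in> (\<Union>j\<in>{0..<m}. {\<psi>\<in>P. \<psi>!0 = j \<and> last \<psi> = j})" by auto
  qed (auto simp: Q0_def)
  have c2: "card Q0 = (\<Sum>j\<in>{0..<m}. ends R j j)"
    unfolding Q0eq ends_def P_def
    by (rule card_UN_disjoint) (use finP P_def in auto)
  have ends_R: "ends R i j = (if i = j then Sf m n else Df m n)" if "i < m" "j < m" for i j
    using const_ends[OF that, of n] unfolding R_def k_def .
  have DS: "Df m n = Sf m n + 1" using SD_parity[of m n] m n by auto
  have d1: "ends R (\<tau> j) j \<le> ends R j j + (if j \<in> M then 1 else 0)" if "j \<in> J" for j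
    using ends_R[of "\<tau> j" j] ends_R[of j j] \<tau>J[OF that] that DS unfolding M_def J_def by auto
  have d: "(\<Sum>j\<in>J. ends R (\<tau> j) j) \<le> (\<Sum>j\<in>{0..<m}. ends R j j) + card M"
  proof -
    have "(\<Sum>j\<in>J. ends R (\<tau> j) j) \<le> (\<Sum>j\<in>J. ends R j j + (if j \<in> M then 1 else 0))"
      by (rule sum_mono) (rule d1)
    also have "\<dots> = (\<Sum>j\<in>J. ends R j j) + (\<Sum>j\<in>J. (if j \<in> M then 1 else 0))"
      by (rule sum.distrib)
    also have "(\<Sum>j\<in>J. (if j \<in> M then 1 else 0)) = card M"
    proof -
      have "(\<Sum>j\<in>J. (if j \<in> M then 1 else (0::nat))) = (\<Sum>j\<in>M. 1)"
        by (rule sum.mono_neutral_cong_right) (use finJ M_def in auto)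
      then show ?thesis by simp
    qed
    also have "(\<Sum>j\<in>J. ends R j j) \<le> (\<Sum>j\<in>{0..<m}. ends R j j)"
      by (rule sum_mono2) (auto simp: J_def)
    finally show ?thesis by simp
  qed
  define W where "W j = {\<psi>\<in>Z. \<exists>t. Suc t < k \<and> \<psi>!t = j \<and> \<psi>!Suc t = j \<and>
       (\<forall>i. Suc i < k \<longrightarrow> i \<noteq> t \<longrightarrow> \<psi>!i \<noteq> \<psi>!Suc i)}" for j
  have Wne: "W j \<noteq> {}" if jM: "j \<in> M" for j
  proof -
    have jm: "j < m" "\<tau> j \<noteq> j" using jM unfolding M_def J_def by auto
    have "\<exists>t. Suc t < k \<and> \<sigma> t j \<notin> K!Suc t"
    proof (rule ccontr)
      assume "\<not> ?thesis"
      then have all: "\<forall>t. Suc t < k \<longrightarrow> \<sigma> t j \<in> K!Suc t" by auto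
      have "\<forall>t<k. \<sigma> t j = \<sigma> 0 j"
      proof (intro allI impI)
        fix t assume "t < k"
        then show "\<sigma> t j = \<sigma> 0 j"
        proof (induction t)
          case 0 then show ?case by simp
        next
          case (Suc t)
          have st: "Suc t < k" using Suc.prems by simp
          have "\<sigma> t j \<in> K!Suc t" using all st by blast
          from relab_cons[OF \<sigma> _ jm(1) this] have "\<sigma> (Suc t) j = \<sigma> t j" using st lK' by simp
          then show ?case using Suc by simp
        qed
      qed
      then have "\<sigma> (k-1) j = \<sigma> 0 j" using k4 by (metis diff_less zero_less_numeral less_le_trans zero_less_one)
      then have "\<tau> j = j" unfolding \<tau>_def using inv_into_f_f[OF inj0, of j] jm by auto
      then show False using jm by simp
    qed
    then obtain t where t: "Suc t < k" "\<sigma> t j \<notin> K!Suc t" by blast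
    obtain \<psi> where \<psi>all: "length \<psi> = k \<and> (\<forall>i<k. \<psi>!i < m) \<and> \<psi>!t = j \<and> \<psi>!Suc t = j \<and>
      (\<forall>i. Suc i < k \<longrightarrow> i \<noteq> t \<longrightarrow> \<psi>!i \<noteq> \<psi>!Suc i) \<and> \<sigma> 0 (\<psi>!0) \<noteq> \<sigma> (k-1) (\<psi>!(k-1))"
      using construct[OF m k4 t(1) jm(1) inj0 inj1] by (rule exE)
    from \<psi>all have \<psi>: "length \<psi> = k" "\<forall>i<k. \<psi>!i < m" "\<psi>!t = j" "\<psi>!Suc t = j"
      "\<forall>i. Suc i < k \<longrightarrow> i \<noteq> t \<longrightarrow> \<psi>!i \<noteq> \<psi>!Suc i" "\<sigma> 0 (\<psi>!0) \<noteq> \<sigma> (k-1) (\<psi>!(k-1))"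
      by simp_all
    have "\<forall>t'. Suc t' < k \<longrightarrow> \<psi>!t' \<noteq> \<psi>!Suc t' \<or> \<sigma> t' (\<psi>!t') \<notin> K!Suc t'"
    proof (intro allI impI)
      fix t' assume "Suc t' < k"
      show "\<psi>!t' \<noteq> \<psi>!Suc t' \<or> \<sigma> t' (\<psi>!t') \<notin> K!Suc t'"
      proof (cases "t' = t")
        case True then show ?thesis using t(2) \<psi>(3) by simp
      next
        case False then show ?thesis using \<psi>(5) \<open>Suc t' < k\<close> by simp
      qed
    qed
    then have "\<psi> \<in> X" unfolding X_def using \<psi>(1,2,6) by simp
    moreover have "\<exists>t. Suc t < k \<and> \<psi>!t = \<psi>!Suc t" using t(1) \<psi>(3,4) by auto
    ultimately have "\<psi> \<in> Z" unfolding Z_def by simp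
    moreover have "\<exists>t. Suc t < k \<and> \<psi>!t = j \<and> \<psi>!Suc t = j \<and>
       (\<forall>i. Suc i < k \<longrightarrow> i \<noteq> t \<longrightarrow> \<psi>!i \<noteq> \<psi>!Suc i)" using t(1) \<psi>(3,4,5) by blast
    ultimately have "\<psi> \<in> W j" unfolding W_def by simp
    then show ?thesis by auto
  qed
  define g where "g j = (SOME \<psi>. \<psi> \<in> W j)" for j
  have gW: "g j \<in> W j" if "j \<in> M" for j
    unfolding g_def using Wne[OF that] by (simp add: some_in_eq)
  have e: "card M \<le> card Z"
  proof (rule card_inj_on_le)
    show "inj_on g M"
    proof (rule inj_onI)
      fix j j' assume jj: "j \<in> M" "j' \<in> M" "g j = g j'"
      obtain t where t: "Suc t < k" "g j!t = j" "g j!Suc t = j"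
        "\<forall>i. Suc i < k \<longrightarrow> i \<noteq> t \<longrightarrow> g j!i \<noteq> g j!Suc i" using gW[OF jj(1)] unfolding W_def by blast
      obtain t' where t': "Suc t' < k" "g j'!t' = j'" "g j'!Suc t' = j'"
        using gW[OF jj(2)] unfolding W_def by blast
      have "t' = t"
      proof (rule ccontr)
        assume "t' \<noteq> t"
        then have "g j!t' \<noteq> g j!Suc t'" using t(4) t'(1) by blast
        then show False using t' jj(3) by simp
      qed
      then show "j = j'" using t t' jj(3) by simp
    qed
    show "g ` M \<subseteq> Z" using gW unfolding W_def by auto
    show "finite Z" using finX unfolding Z_def by auto
  qed
  have "card (cyc R) \<le> card Y + card M" using a b c1 c2 d by linarith
  then show ?thesis using e YZ X_le unfolding R_def k_def by linarith
qed



lemma V_char: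
  assumes "0 < l2" "0 < l3"
  shows "x \<in> theta_V 1 l2 l3 \<longleftrightarrow> (\<exists>j\<le>l2. x = theta_pt l2 2 j) \<or> (\<exists>j\<le>l3. x = theta_pt l3 3 j)"
proof
  assume "x \<in> theta_V 1 l2 l3"
  then have "x \<in> theta_pt 1 1 ` {0..1} \<union> theta_pt l2 2 ` {0..l2} \<union> theta_pt l3 3 ` {0..l3}"
    by (simp add: theta_V_def theta_len_def)
  then consider "\<exists>j\<le>1. x = theta_pt 1 1 j" | "\<exists>j\<le>l2. x = theta_pt l2 2 j" | "\<exists>j\<le>l3. x = theta_pt l3 3 j"
    by (metis (no_types, lifting) UnE atLeastAtMost_iff imageE)
  then show "(\<exists>j\<le>l2. x = theta_pt l2 2 j) \<or> (\<exists>j\<le>l3. x = theta_pt l3 3 j)"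
  proof cases
    case 1
    then obtain j where "j \<le> 1" "x = theta_pt 1 1 j" by blast
    then have "x = theta_pt l2 2 0 \<or> x = theta_pt l2 2 l2"
      using assms by (cases j) (auto simp: theta_pt_def)
    then show ?thesis by blast
  qed auto
next
  assume "(\<exists>j\<le>l2. x = theta_pt l2 2 j) \<or> (\<exists>j\<le>l3. x = theta_pt l3 3 j)"
  then show "x \<in> theta_V 1 l2 l3"
    unfolding theta_V_def theta_len_def by auto
qed

lemma theta_E_eq:
  "theta_E 1 l2 l3 = {{(0,0),(0,1)}} \<union> (\<lambda>j. {theta_pt l2 2 j, theta_pt l2 2 (Suc j)}) ` {0..<l2}
     \<union> (\<lambda>j. {theta_pt l3 3 j, theta_pt l3 3 (Suc j)}) ` {0..<l3}"
proof -
  have "(\<lambda>j. {theta_pt 1 1 j, theta_pt 1 1 (Suc j)}) ` {0..<1} = {{(0,0),(0,1)}}"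
    by (simp add: theta_pt_def)
  then show ?thesis by (simp add: theta_E_def theta_len_def)
qed

lemma E_char:
  "e \<in> theta_E 1 l2 l3 \<longleftrightarrow> e = {(0,0),(0,1)} \<or> (\<exists>j<l2. e = {theta_pt l2 2 j, theta_pt l2 2 (Suc j)})
     \<or> (\<exists>j<l3. e = {theta_pt l3 3 j, theta_pt l3 3 (Suc j)})"
  unfolding theta_E_eq by auto

lemma edge_iff:
  "(\<forall>x y. {x,y} \<in> theta_E 1 l2 l3 \<longrightarrow> f x \<noteq> f y) \<longleftrightarrow>
   f (0,0) \<noteq> f (0,1) \<and> (\<forall>j<l2. f (theta_pt l2 2 j) \<noteq> f (theta_pt l2 2 (Suc j))) \<and>
   (\<forall>j<l3. f (theta_pt l3 3 j) \<noteq> f (theta_pt l3 3 (Suc j)))"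
proof
  assume h: "\<forall>x y. {x,y} \<in> theta_E 1 l2 l3 \<longrightarrow> f x \<noteq> f y"
  show "f (0,0) \<noteq> f (0,1) \<and> (\<forall>j<l2. f (theta_pt l2 2 j) \<noteq> f (theta_pt l2 2 (Suc j))) \<and>
   (\<forall>j<l3. f (theta_pt l3 3 j) \<noteq> f (theta_pt l3 3 (Suc j)))"
    using h unfolding E_char by blast
next
  assume h: "f (0,0) \<noteq> f (0,1) \<and> (\<forall>j<l2. f (theta_pt l2 2 j) \<noteq> f (theta_pt l2 2 (Suc j))) \<and>
   (\<forall>j<l3. f (theta_pt l3 3 j) \<noteq> f (theta_pt l3 3 (Suc j)))"
  show "\<forall>x y. {x,y} \<in> theta_E 1 l2 l3 \<longrightarrow> f x \<noteq> f y"
  proof (intro allI impI)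
    fix x y assume "{x,y} \<in> theta_E 1 l2 l3"
    then consider "{x,y} = {(0,0),(0,1)}" | j where "j<l2" "{x,y} = {theta_pt l2 2 j, theta_pt l2 2 (Suc j)}"
      | j where "j<l3" "{x,y} = {theta_pt l3 3 j, theta_pt l3 3 (Suc j)}"
      unfolding E_char by blast
    then show "f x \<noteq> f y"
    proof cases
      case 1 then show ?thesis using h by (auto simp: doubleton_eq_iff)
    next
      case 2 then show ?thesis using h by (auto simp: doubleton_eq_iff)
    next
      case 3 then show ?thesis using h by (auto simp: doubleton_eq_iff)
    qed
  qed
qed



lemma pt_0[simp]: "theta_pt l i 0 = (0,0)" by (simp add: theta_pt_def)
lemma pt_l: "0 < l \<Longrightarrow> theta_pt l i l = (0,1)" by (simp add: theta_pt_def)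
lemma pt_mid: "0 < j \<Longrightarrow> j < l \<Longrightarrow> theta_pt l i j = (i,j)" by (simp add: theta_pt_def)

lemma theta_count:
  assumes l2: "0 < l2" and l3: "0 < l3" and fin: "\<forall>v\<in>theta_V 1 l2 l3. finite (L v)"
  shows "num_list_colorings (theta_V 1 l2 l3) (theta_E 1 l2 l3) L =
    (\<Sum>z3\<in>cyc (map (\<lambda>j. L (theta_pt l3 3 j)) [0..<Suc l3]).
        ends (map (\<lambda>j. L (theta_pt l2 2 j)) [0..<Suc l2]) (z3!0) (last z3))"
proof -
  define V where "V = theta_V 1 l2 l3"
  define E where "E = theta_E 1 l2 l3"
  define p2 where "p2 = theta_pt l2 2"
  define p3 where "p3 = theta_pt l3 3"
  define K2 where "K2 = map (\<lambda>j. L (p2 j)) [0..<Suc l2]"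
  define K3 where "K3 = map (\<lambda>j. L (p3 j)) [0..<Suc l3]"
  define PLC where "PLC = proper_list_colorings V E L"
  define Bf where "Bf z3 = {z2\<in>pw K2. z2!0 = z3!0 \<and> last z2 = last z3}" for z3
  define F where "F f = (map (\<lambda>j. f (p3 j)) [0..<Suc l3], map (\<lambda>j. f (p2 j)) [0..<Suc l2])" for f :: "nat \<times> nat \<Rightarrow> nat"
  have Vc: "x \<in> V \<longleftrightarrow> (\<exists>j\<le>l2. x = p2 j) \<or> (\<exists>j\<le>l3. x = p3 j)" for x
    unfolding V_def p2_def p3_def using V_char[OF l2 l3] by simp
  have p2V: "j \<le> l2 \<Longrightarrow> p2 j \<in> V" for j using Vc by blast
  have p3V: "j \<le> l3 \<Longrightarrow> p3 j \<in> V" for j using Vc by blast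
  have p2l: "p2 l2 = (0,1)" and p3l: "p3 l3 = (0,1)" unfolding p2_def p3_def using pt_l l2 l3 by auto
  have p20: "p2 0 = (0,0)" and p30: "p3 0 = (0,0)" unfolding p2_def p3_def by auto
  have edges: "(\<forall>x y. {x,y} \<in> E \<longrightarrow> f x \<noteq> f y) \<longleftrightarrow>
   f (0,0) \<noteq> f (0,1) \<and> (\<forall>j<l2. f (p2 j) \<noteq> f (p2 (Suc j))) \<and> (\<forall>j<l3. f (p3 j) \<noteq> f (p3 (Suc j)))" for f
    unfolding E_def p2_def p3_def by (rule edge_iff)
  have PLCiff: "f \<in> PLC \<longleftrightarrow> (\<forall>v\<in>V. f v \<in> L v) \<and> (\<forall>v. v \<notin> V \<longrightarrow> f v = undefined) \<and>
      (\<forall>x y. {x,y} \<in> E \<longrightarrow> f x \<noteq> f y)" for f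
    unfolding PLC_def proper_list_colorings_def by simp
  have finK2: "\<forall>X\<in>set K2. finite X" unfolding K2_def using fin p2V V_def by auto
  have finK3: "\<forall>X\<in>set K3. finite X" unfolding K3_def using fin p3V V_def by auto
  have lK2: "length K2 = Suc l2" and lK3: "length K3 = Suc l3" unfolding K2_def K3_def by auto
  have bij: "bij_betw F PLC (Sigma (cyc K3) Bf)"
    unfolding bij_betw_def
  proof (intro conjI)
    show "inj_on F PLC"
    proof (rule inj_onI)
      fix f g assume f: "f \<in> PLC" and g: "g \<in> PLC" and eq: "F f = F g"
      have e3: "f (p3 j) = g (p3 j)" if "j \<le> l3" for j
      proof -
        have "fst (F f) ! j = fst (F g) ! j" using eq by simp
        then show ?thesis using that unfolding F_def by (simp del: upt_Suc)
      qed
      have e2: "f (p2 j) = g (p2 j)" if "j \<le> l2" for j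
      proof -
        have "snd (F f) ! j = snd (F g) ! j" using eq by simp
        then show ?thesis using that unfolding F_def by (simp del: upt_Suc)
      qed
      show "f = g"
      proof
        fix x show "f x = g x"
        proof (cases "x \<in> V")
          case True
          then consider j where "j \<le> l2" "x = p2 j" | j where "j \<le> l3" "x = p3 j"
            unfolding Vc by blast
          then show ?thesis
          proof cases
            case 1 then show ?thesis using e2 by simp
          next
            case 2 then show ?thesis using e3 by simp
          qed
        next
          case False
          have "\<forall>v. v \<notin> V \<longrightarrow> f v = undefined" "\<forall>v. v \<notin> V \<longrightarrow> g v = undefined"
            using f g unfolding PLCiff by blast+
          then show ?thesis using False by metis
        qed
      qed
    qed
  next
    show "F ` PLC = Sigma (cyc K3) Bf"
    proof (intro equalityI subsetI)
      fix w assume "w \<in> F ` PLC"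
      then obtain f where f: "f \<in> PLC" "w = F f" by auto
      have fL: "\<forall>v\<in>V. f v \<in> L v" and fE: "f (0,0) \<noteq> f (0,1)" "\<forall>j<l2. f (p2 j) \<noteq> f (p2 (Suc j))"
        "\<forall>j<l3. f (p3 j) \<noteq> f (p3 (Suc j))" using f(1) unfolding PLCiff edges by auto
      define z3 where "z3 = map (\<lambda>j. f (p3 j)) [0..<Suc l3]"
      define z2 where "z2 = map (\<lambda>j. f (p2 j)) [0..<Suc l2]"
      have z3n: "j \<le> l3 \<Longrightarrow> z3!j = f (p3 j)" for j unfolding z3_def by (simp del: upt_Suc)
      have z2n: "j \<le> l2 \<Longrightarrow> z2!j = f (p2 j)" for j unfolding z2_def by (simp del: upt_Suc)
      have lz3: "length z3 = Suc l3" and lz2: "length z2 = Suc l2" unfolding z2_def z3_def by auto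
      have z3l: "last z3 = f (0,1)" using last_len[OF lz3] z3n[of l3] p3l by simp
      have z2l: "last z2 = f (0,1)" using last_len[OF lz2] z2n[of l2] p2l by simp
      have "z3 \<in> pw K3"
        unfolding pw_def using lz3 lK3 z3n fL p3V fE(3) by (auto simp: K3_def simp del: upt_Suc)
      then have "z3 \<in> cyc K3" unfolding cyc_def using z3l z3n[of 0] p30 fE(1) by simp
      moreover have "z2 \<in> pw K2"
        unfolding pw_def using lz2 lK2 z2n fL p2V fE(2) by (auto simp: K2_def simp del: upt_Suc)
      then have "z2 \<in> Bf z3" unfolding Bf_def using z2l z3l z2n[of 0] z3n[of 0] p20 p30 by simp
      ultimately show "w \<in> Sigma (cyc K3) Bf" using f(2) unfolding F_def z2_def z3_def by simp
    next
      fix w assume "w \<in> Sigma (cyc K3) Bf"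
      then obtain z3 z2 where w: "w = (z3, z2)" "z3 \<in> cyc K3" "z2 \<in> Bf z3" by auto
      have z3: "length z3 = Suc l3" "\<forall>i<Suc l3. z3!i \<in> K3!i" "\<forall>i. Suc i < Suc l3 \<longrightarrow> z3!i \<noteq> z3!Suc i"
        "z3!0 \<noteq> last z3" using w(2) lK3 unfolding cyc_def pw_def by auto
      have z2: "length z2 = Suc l2" "\<forall>i<Suc l2. z2!i \<in> K2!i" "\<forall>i. Suc i < Suc l2 \<longrightarrow> z2!i \<noteq> z2!Suc i"
        "z2!0 = z3!0" "last z2 = last z3" using w(3) lK2 unfolding Bf_def pw_def by auto
      have z3last: "last z3 = z3!l3" using last_len[OF z3(1)] .
      have z2last: "last z2 = z2!l2" using last_len[OF z2(1)] .
      define f where "f x = (if x \<in> V then (if fst x = 2 then z2 ! snd x else if x = (0,1) then z3 ! l3 else z3 ! snd x) else undefined)" for x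
      have fp2: "f (p2 j) = z2!j" if jl: "j \<le> l2" for j
      proof -
        have "p2 j \<in> V" using p2V that .
        consider "j = 0" | "j = l2" | "0 < j" "j < l2" using jl by (metis le_neq_implies_less neq0_conv)
        then show ?thesis
        proof cases
          case 1 then show ?thesis using \<open>p2 j \<in> V\<close> p20 z2(4) unfolding f_def by auto
        next
          case 2 then show ?thesis using \<open>p2 j \<in> V\<close> p2l z2(5) z2last z3last unfolding f_def by auto
        next
          case 3 then have "p2 j = (2,j)" unfolding p2_def by (simp add: pt_mid)
          then show ?thesis using \<open>p2 j \<in> V\<close> unfolding f_def by auto
        qed
      qed
      have fp3: "f (p3 j) = z3!j" if jl: "j \<le> l3" for j
      proof -
        have "p3 j \<in> V" using p3V that .
        consider "j = 0" | "j = l3" | "0 < j" "j < l3" using jl by (metis le_neq_implies_less neq0_conv)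
        then show ?thesis
        proof cases
          case 1 then show ?thesis using \<open>p3 j \<in> V\<close> p30 unfolding f_def by auto
        next
          case 2 then show ?thesis using \<open>p3 j \<in> V\<close> p3l unfolding f_def by auto
        next
          case 3 then have "p3 j = (3,j)" unfolding p3_def by (simp add: pt_mid)
          then show ?thesis using \<open>p3 j \<in> V\<close> unfolding f_def by auto
        qed
      qed
      have "f \<in> PLC"
        unfolding PLCiff edges
      proof (intro conjI ballI allI impI)
        fix v assume "v \<in> V"
        then consider j where "j \<le> l2" "v = p2 j" | j where "j \<le> l3" "v = p3 j" using Vc by blast
        then show "f v \<in> L v"
        proof cases
          case 1 then show ?thesis using fp2 z2(2) by (auto simp: K2_def simp del: upt_Suc)
        next
          case 2 then show ?thesis using fp3 z3(2) by (auto simp: K3_def simp del: upt_Suc)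
        qed
      next
        fix v assume "v \<notin> V" then show "f v = undefined" unfolding f_def by simp
      next
        show "f (0,0) \<noteq> f (0,1)" using fp3[of 0] fp3[of l3] p30 p3l z3(4) z3last by simp
      next
        fix j assume "j < l2" then show "f (p2 j) \<noteq> f (p2 (Suc j))" using fp2 z2(3) by simp
      next
        fix j assume "j < l3" then show "f (p3 j) \<noteq> f (p3 (Suc j))" using fp3 z3(3) by simp
      qed
      moreover have "F f = (z3, z2)"
      proof -
        have "map (\<lambda>j. f (p3 j)) [0..<Suc l3] = z3"
          by (rule nth_equalityI) (use z3(1) fp3 in \<open>auto simp del: upt_Suc\<close>)
        moreover have "map (\<lambda>j. f (p2 j)) [0..<Suc l2] = z2"
          by (rule nth_equalityI) (use z2(1) fp2 in \<open>auto simp del: upt_Suc\<close>)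
        ultimately show ?thesis unfolding F_def by simp
      qed
      ultimately show "w \<in> F ` PLC" using w(1) by (metis image_eqI)
    qed
  qed
  have "card PLC = card (Sigma (cyc K3) Bf)" using bij_betw_same_card[OF bij] .
  also have "\<dots> = (\<Sum>z3\<in>cyc K3. card (Bf z3))"
  proof (rule card_SigmaI)
    show "finite (cyc K3)" unfolding cyc_def using pw_finite[OF finK3] by simp
    show "\<forall>a\<in>cyc K3. finite (Bf a)" unfolding Bf_def using pw_finite[OF finK2] by simp
  qed
  finally show ?thesis
    unfolding num_list_colorings_def PLC_def V_def E_def K2_def K3_def Bf_def ends_def p2_def p3_def by simp
qed



theorem lemma2p8:
  fixes l2 l3 :: nat
  assumes "even l2" and "l2 > 0" and "odd l3" and "l3 > 1"
  shows "enum_chrom_choosable (theta_V 1 l2 l3) (theta_E 1 l2 l3)"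
  unfolding enum_chrom_choosable_def
proof
  fix m :: nat
  define V where "V = theta_V 1 l2 l3"
  define E where "E = theta_E 1 l2 l3"
  have l2p: "0 < l2" and l3p: "0 < l3" using assms by auto
  define Kc2 where "Kc2 = replicate (Suc l2) {0..<m}"
  define Kc3 where "Kc3 = replicate (Suc l3) {0..<m}"
  define D where "D = Df m (l2 - 1)"
  have Kc2s: "Suc (Suc (l2 - 1)) = Suc l2" using l2p by simp
  have Kc3s: "Suc (Suc (l3 - 1)) = Suc l3" using l3p by simp
  have const: "chrom_poly V E m = card (cyc Kc3) * D"
  proof -
    have "chrom_poly V E m = (\<Sum>z3\<in>cyc Kc3. ends Kc2 (z3!0) (last z3))"
      unfolding chrom_poly_def V_def E_def Kc2_def Kc3_def
      using theta_count[OF l2p l3p, of "\<lambda>_. {0..<m}"] by (simp add: map_replicate_const)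
    also have "\<dots> = (\<Sum>z3\<in>cyc Kc3. D)"
    proof (rule sum.cong[OF refl])
      fix z3 assume z3: "z3 \<in> cyc Kc3"
      then have z: "length z3 = Suc l3" "\<forall>i<Suc l3. z3!i < m" "z3!0 \<noteq> last z3"
        unfolding cyc_def Kc3_def pw_const_iff by auto
      have "last z3 = z3!l3" using last_len[OF z(1)] .
      then have "z3!0 < m" "last z3 < m" using z(2) by auto
      then show "ends Kc2 (z3!0) (last z3) = D"
        using const_ends[of "z3!0" m "last z3" "l2 - 1"] z(3) Kc2s unfolding Kc2_def D_def by simp
    qed
    also have "\<dots> = card (cyc Kc3) * D" by simp
    finally show ?thesis .
  qed
  have lower: "chrom_poly V E m \<le> num_list_colorings V E L" if mL: "m_assignment V m L" for L
  proof (cases "m \<le> 2")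
    case True
    obtain r where r: "l2 = 2*r" using assms(1) by (rule evenE)
    then have "r \<noteq> 0" using l2p by simp
    then obtain q where "r = Suc q" by (cases r) auto
    then have q: "l2 = Suc (Suc (2*q))" using r by simp
    have "D = 0" unfolding D_def using SD_small[OF True, of q] q by simp
    then show ?thesis using const by simp
  next
    case False
    then have m3: "3 \<le> m" by simp
    define p2 where "p2 = theta_pt l2 2"
    define p3 where "p3 = theta_pt l3 3"
    define K2 where "K2 = map (\<lambda>j. L (p2 j)) [0..<Suc l2]"
    define K3 where "K3 = map (\<lambda>j. L (p3 j)) [0..<Suc l3]"
    have Vc: "x \<in> V \<longleftrightarrow> (\<exists>j\<le>l2. x = p2 j) \<or> (\<exists>j\<le>l3. x = p3 j)" for x
      unfolding V_def p2_def p3_def using V_char[OF l2p l3p] by simp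
    have mL': "\<forall>v\<in>V. finite (L v) \<and> card (L v) = m" using mL unfolding m_assignment_def by simp
    have p2V: "p2 j \<in> V" if "j \<le> l2" for j using Vc that by blast
    have p3V: "p3 j \<in> V" if "j \<le> l3" for j using Vc that by blast
    have K2m: "\<forall>X\<in>set K2. finite X \<and> card X = m"
    proof
      fix X assume "X \<in> set K2"
      then obtain j where "j \<le> l2" "X = L (p2 j)" unfolding K2_def by (auto simp del: upt_Suc simp: less_Suc_eq_le)
      then show "finite X \<and> card X = m" using mL' p2V by auto
    qed
    have K3m: "\<forall>X\<in>set K3. finite X \<and> card X = m"
    proof
      fix X assume "X \<in> set K3"
      then obtain j where "j \<le> l3" "X = L (p3 j)" unfolding K3_def by (auto simp del: upt_Suc simp: less_Suc_eq_le)
      then show "finite X \<and> card X = m" using mL' p3V by auto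
    qed
    have lK2: "length K2 = Suc (Suc (l2 - 1))" unfolding K2_def using Kc2s by simp
    have lK3: "length K3 = Suc (Suc (l3 - 1))" unfolding K3_def using Kc3s by simp
    have cnt: "num_list_colorings V E L = (\<Sum>z3\<in>cyc K3. ends K2 (z3!0) (last z3))"
      unfolding V_def E_def K2_def K3_def p2_def p3_def
      using theta_count[OF l2p l3p, of L] mL' V_def by simp
    have K20: "K2!0 = L (0,0)" unfolding K2_def p2_def by (simp del: upt_Suc)
    have K30: "K3!0 = L (0,0)" unfolding K3_def p3_def by (simp del: upt_Suc)
    have K2l: "last K2 = L (0,1)"
      using last_len[of K2 l2] lK2 Kc2s pt_l[OF l2p] unfolding K2_def p2_def by (simp del: upt_Suc)
    have K3l: "K3!l3 = L (0,1)"
      using pt_l[OF l3p] unfolding K3_def p3_def by (simp del: upt_Suc)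
    have "(\<Sum>z3\<in>cyc K3. D) \<le> (\<Sum>z3\<in>cyc K3. ends K2 (z3!0) (last z3))"
    proof (rule sum_mono)
      fix z3 assume z3: "z3 \<in> cyc K3"
      then have z: "length z3 = Suc l3" "\<forall>i<Suc l3. z3!i \<in> K3!i"
        unfolding cyc_def pw_def using lK3 Kc3s by auto
      have a: "z3!0 \<in> K2!0" using z(2) K20 K30 by auto
      have "last z3 = z3!l3" using last_len[OF z(1)] .
      then have b: "last z3 \<in> last K2" using z(2) K3l K2l by auto
      have "odd (l2 - 1)" using assms(1) l2p by simp
      then show "D \<le> ends K2 (z3!0) (last z3)"
        unfolding D_def using L1[OF K2m lK2 _ _ a b] m3 by simp
    qed
    then have "card (cyc K3) * D \<le> num_list_colorings V E L" using cnt by simp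
    moreover have "card (cyc Kc3) \<le> card (cyc K3)"
    proof -
      have "even (l3 - 1)" "l3 - 1 \<noteq> 0" using assms(3,4) by auto
      then show ?thesis using L2[OF K3m lK3 _ _ m3] Kc3s unfolding Kc3_def by simp
    qed
    moreover have "card (cyc Kc3) * D \<le> card (cyc K3) * D"
      using calculation(2) by (rule mult_le_mono1)
    ultimately show ?thesis using const by linarith
  qed
  have mem: "chrom_poly V E m \<in> {num_list_colorings V E L | L. m_assignment V m L}"
  proof -
    have "m_assignment V m (\<lambda>_. {0..<m})" unfolding m_assignment_def by simp
    then show ?thesis unfolding chrom_poly_def by blast
  qed
  have "list_color_fun V E m = chrom_poly V E m"
    unfolding list_color_fun_def
  proof (rule cInf_eq_minimum[OF mem])
    fix x assume "x \<in> {num_list_colorings V E L | L. m_assignment V m L}"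
    then obtain L where "x = num_list_colorings V E L" "m_assignment V m L" by blast
    then show "chrom_poly V E m \<le> x" using lower by simp
  qed
  then show "list_color_fun (theta_V 1 l2 l3) (theta_E 1 l2 l3) m = chrom_poly (theta_V 1 l2 l3) (theta_E 1 l2 l3) m"
    unfolding V_def E_def .
qed


end
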